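(* Let $Q$ be a quiver without oriented cycles and $v_0\in Q_0$ a vertex whose only incident arrows are arrows $a_1,\dots,a_l$ with $ta_i=v_i$, $ha_i=v_0$, and a single arrow $b$ with $tb=v_0$, $hb=w$. Let $\overline{Q}$ be the quiver with $\overline{Q}_0=Q_0\setminus\{v_0\}$ and $\overline{Q}_1=(Q_1\setminus\{b,a_1,\dots,a_l\})\cup\{ba_1,\dots,ba_l\}$, where $ba_i$ is an arrow from $v_i$ to $w$. If $Q$ satisfies property (S), then so does $\overline{Q}$.
   Context: Work over an algebraically closed field $k$ of characteristic zero. For a representation $W$ of dimension vector $\beta$, $S(W)=\{\sigma\in\mathbb{Z}^{Q_0}\mid\exists f\in\operatorname{SI}(Q,\beta)_\sigma,\ f(W)\neq0\}$, where $\operatorname{SI}(Q,\beta)_\sigma$ is the space of polynomial functions on $\operatorname{Rep}(Q,\beta)$ semi-invariant of weight $g\mapsto\prod_x\det(g(x))^{\sigma(x)}$ under $\operatorname{GL}(\beta)=\prod_x\operatorname{GL}(\beta(x))$ acting by $(g\cdot W)(a)=g(ha)W(a)g(ta)^{-1}$. A set $S$ is saturated if $n\sigma\in S$, $n\ge1$, implies $\sigma\in S$. A quiver has property (S) if $S(W)$ is saturated for all of its representations $W$. *)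

theory Defs
  imports "HOL-Computational_Algebra.Polynomial"
          "Jordan_Normal_Form.Determinant"
          "Jordan_Normal_Form.Gauss_Jordan_Elimination"
begin

record ('v, 'e) quiver =
  Q0 :: "'v set"
  Q1 :: "'e set"
  tl :: "'e \<Rightarrow> 'v"
  hd :: "'e \<Rightarrow> 'v"

definition wf_quiver :: "('v, 'e) quiver \<Rightarrow> bool" where
  "wf_quiver Q \<longleftrightarrow> finite (Q0 Q) \<and> finite (Q1 Q) \<and>
     (\<forall>a\<in>Q1 Q. tl Q a \<in> Q0 Q \<and> hd Q a \<in> Q0 Q)"

definition no_oriented_cycles :: "('v, 'e) quiver \<Rightarrow> bool" where
  "no_oriented_cycles Q \<longleftrightarrow> acyclic {(tl Q a, hd Q a) | a. a \<in> Q1 Q}"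

definition Rep :: "('v, 'e) quiver \<Rightarrow> ('v \<Rightarrow> nat) \<Rightarrow> ('e \<Rightarrow> 'k::field mat) set" where
  "Rep Q \<beta> = {W. \<forall>a\<in>Q1 Q. W a \<in> carrier_mat (\<beta> (hd Q a)) (\<beta> (tl Q a))}"

definition GL :: "('v, 'e) quiver \<Rightarrow> ('v \<Rightarrow> nat) \<Rightarrow> ('v \<Rightarrow> 'k::field mat) set" where
  "GL Q \<beta> = {g. \<forall>x\<in>Q0 Q. g x \<in> carrier_mat (\<beta> x) (\<beta> x) \<and> det (g x) \<noteq> 0}"

definition mat_inv :: "'k::field mat \<Rightarrow> 'k mat" where
  "mat_inv A = the (mat_inverse A)"

definition act :: "('v, 'e) quiver \<Rightarrow> ('v \<Rightarrow> 'k::field mat) \<Rightarrow> ('e \<Rightarrow> 'k mat) \<Rightarrow> ('e \<Rightarrow> 'k mat)" where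
  "act Q g W = (\<lambda>a. g (hd Q a) * W a * mat_inv (g (tl Q a)))"

inductive_set poly_fun :: "('v, 'e) quiver \<Rightarrow> ('v \<Rightarrow> nat) \<Rightarrow> (('e \<Rightarrow> 'k::field mat) \<Rightarrow> 'k) set"
  for Q :: "('v, 'e) quiver" and \<beta> :: "'v \<Rightarrow> nat" where
  const: "(\<lambda>W. c) \<in> poly_fun Q \<beta>"
| coord: "\<lbrakk>a \<in> Q1 Q; i < \<beta> (hd Q a); j < \<beta> (tl Q a)\<rbrakk> \<Longrightarrow> (\<lambda>W. W a $$ (i, j)) \<in> poly_fun Q \<beta>"
| add: "\<lbrakk>f \<in> poly_fun Q \<beta>; g \<in> poly_fun Q \<beta>\<rbrakk> \<Longrightarrow> (\<lambda>W. f W + g W) \<in> poly_fun Q \<beta>"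
| mult: "\<lbrakk>f \<in> poly_fun Q \<beta>; g \<in> poly_fun Q \<beta>\<rbrakk> \<Longrightarrow> (\<lambda>W. f W * g W) \<in> poly_fun Q \<beta>"

definition character :: "('v, 'e) quiver \<Rightarrow> ('v \<Rightarrow> int) \<Rightarrow> ('v \<Rightarrow> 'k::field mat) \<Rightarrow> 'k" where
  "character Q \<sigma> g = (\<Prod>x\<in>Q0 Q. det (g x) powi \<sigma> x)"

definition SI :: "('v, 'e) quiver \<Rightarrow> ('v \<Rightarrow> nat) \<Rightarrow> ('v \<Rightarrow> int) \<Rightarrow> (('e \<Rightarrow> 'k::field mat) \<Rightarrow> 'k) set" where
  "SI Q \<beta> \<sigma> = {f \<in> poly_fun Q \<beta>.
     \<forall>g\<in>GL Q \<beta>. \<forall>W\<in>Rep Q \<beta>. f (act Q g W) = character Q \<sigma> g * f W}"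

text \<open>S(W) \<subseteq> Z^{Q0} (weights are taken to vanish outside Q0).\<close>
definition S_of :: "('v, 'e) quiver \<Rightarrow> ('v \<Rightarrow> nat) \<Rightarrow> ('e \<Rightarrow> 'k::field mat) \<Rightarrow> ('v \<Rightarrow> int) set" where
  "S_of Q \<beta> W = {\<sigma>. (\<forall>x. x \<notin> Q0 Q \<longrightarrow> \<sigma> x = 0) \<and> (\<exists>f\<in>SI Q \<beta> \<sigma>. f W \<noteq> 0)}"

definition saturated :: "('v \<Rightarrow> int) set \<Rightarrow> bool" where
  "saturated S \<longleftrightarrow> (\<forall>\<sigma> (n::nat). n \<ge> 1 \<longrightarrow> (\<lambda>x. int n * \<sigma> x) \<in> S \<longrightarrow> \<sigma> \<in> S)"

definition property_S :: "'k::field itself \<Rightarrow> ('v, 'e) quiver \<Rightarrow> bool" where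
  "property_S TYPE('k) Q \<longleftrightarrow>
     (\<forall>(\<beta>::'v \<Rightarrow> nat) (W::'e \<Rightarrow> 'k mat). W \<in> Rep Q \<beta> \<longrightarrow> saturated (S_of Q \<beta> W))"

text \<open>The quiver Qbar obtained by deleting v0 and composing b with each a_i.
  Arrows of Qbar: Inl e for the old arrows e \<notin> {b} \<union> A, Inr a for the composite b a (a \<in> A).\<close>
definition contract_quiver :: "('v, 'e) quiver \<Rightarrow> 'v \<Rightarrow> 'e set \<Rightarrow> 'e \<Rightarrow> ('v, 'e + 'e) quiver" where
  "contract_quiver Q v0 A b =
     \<lparr> Q0 = Q0 Q - {v0},
       Q1 = Inl ` (Q1 Q - insert b A) \<union> Inr ` A,
       tl = (\<lambda>e. case e of Inl a \<Rightarrow> tl Q a | Inr a \<Rightarrow> tl Q a),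
       hd = (\<lambda>e. case e of Inl a \<Rightarrow> hd Q a | Inr a \<Rightarrow> hd Q b) \<rparr>"

end

theory Submission
  imports Defs
begin

lemma poly_fun_agree:
  assumes "f \<in> poly_fun Q \<beta>" "\<forall>a\<in>Q1 Q. V a = V' a"
  shows "f V = f V'"
  using assms by (induction rule: poly_fun.induct) auto

lemma poly_fun_sum:
  assumes "finite K" "\<forall>k\<in>K. f k \<in> poly_fun Q \<beta>"
  shows "(\<lambda>V. \<Sum>k\<in>K. f k V) \<in> poly_fun Q \<beta>"
  using assms
proof (induction K rule: finite_induct)
  case empty
  then show ?case using poly_fun.const[of 0] by simp
next
  case (insert x F)
  then have "(\<lambda>V. f x V + (\<Sum>k\<in>F. f k V)) \<in> poly_fun Q \<beta>"
    by (intro poly_fun.add) auto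
  then show ?case using insert by simp
qed

lemma poly_fun_subst:
  assumes "f \<in> poly_fun Q \<beta>"
    and "\<And>a i j. a \<in> Q1 Q \<Longrightarrow> i < \<beta> (hd Q a) \<Longrightarrow> j < \<beta> (tl Q a) \<Longrightarrow>
          (\<lambda>V. F V a $$ (i, j)) \<in> poly_fun Q' \<beta>'"
  shows "(\<lambda>V. f (F V)) \<in> poly_fun Q' \<beta>'"
  using assms(1)
proof (induction rule: poly_fun.induct)
  case (const c)
  then show ?case by (rule poly_fun.const)
next
  case (coord a i j)
  then show ?case using assms(2) by auto
next
  case (add f g)
  then show ?case using poly_fun.add by fastforce
next
  case (mult f g)
  then show ?case using poly_fun.mult by fastforce
qed

lemma mat_inv_props:
  fixes M :: "'k::field mat"
  assumes "M \<in> carrier_mat n n" "det M \<noteq> 0"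
  shows "mat_inv M \<in> carrier_mat n n" "M * mat_inv M = 1\<^sub>m n" "mat_inv M * M = 1\<^sub>m n"
proof -
  have u: "M \<in> Units (ring_mat TYPE('k) n undefined)"
    using det_non_zero_imp_unit[OF assms] .
  obtain B where B: "mat_inverse M = Some B"
    using mat_inverse(1)[OF assms(1), of undefined] u by (cases "mat_inverse M") auto
  from mat_inverse(2)[OF assms(1) B] B show
    "mat_inv M \<in> carrier_mat n n" "M * mat_inv M = 1\<^sub>m n" "mat_inv M * M = 1\<^sub>m n"
    unfolding mat_inv_def by auto
qed

lemma mat_cancel:
  fixes G :: "'k::field mat"
  assumes G: "G \<in> carrier_mat n n" and B: "B \<in> carrier_mat n m" and H: "H \<in> carrier_mat m m"
    and Hi: "Hi \<in> carrier_mat m m" and HH: "Hi * H = 1\<^sub>m m" and X: "X \<in> carrier_mat m p" and K: "K \<in> carrier_mat p p"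
  shows "(G * B * Hi) * (H * X * K) = G * (B * X) * K"
proof -
  have GB: "G * B \<in> carrier_mat n m" using G B by simp
  have HX: "H * X \<in> carrier_mat m p" using H X by simp
  have HXK: "H * X * K \<in> carrier_mat m p" using HX K by simp
  have XK: "X * K \<in> carrier_mat m p" using X K by simp
  have e1: "(G * B * Hi) * (H * X * K) = (G * B) * (Hi * (H * X * K))"
    using assoc_mult_mat[OF GB Hi HXK] .
  have e2: "H * X * K = H * (X * K)" using assoc_mult_mat[OF H X K] .
  have e3: "Hi * (H * (X * K)) = (Hi * H) * (X * K)" using assoc_mult_mat[OF Hi H XK] by simp
  have e4: "(Hi * H) * (X * K) = X * K" unfolding HH using left_mult_one_mat[OF XK] .
  have e5: "(G * B) * (X * K) = G * (B * (X * K))" using assoc_mult_mat[OF G B XK] .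
  have e6: "B * (X * K) = (B * X) * K" using assoc_mult_mat[OF B X K] by simp
  have BX: "B * X \<in> carrier_mat n p" using B X by simp
  have e7: "G * ((B * X) * K) = G * (B * X) * K" using assoc_mult_mat[OF G BX K] by simp
  show ?thesis using e1 e2 e3 e4 e5 e6 e7 by simp
qed

lemma char_eq:
  assumes "finite S" "v0 \<in> S" "\<sigma> v0 = 0" "\<forall>x\<in>S-{v0}. g x = g' x"
  shows "(\<Prod>x\<in>S. det (g x) powi \<sigma> x) = (\<Prod>x\<in>S-{v0}. det (g' x) powi \<sigma> x)"
proof -
  have "(\<Prod>x\<in>S. det (g x) powi \<sigma> x) = det (g v0) powi \<sigma> v0 * (\<Prod>x\<in>S-{v0}. det (g x) powi \<sigma> x)"
    using assms by (simp add: prod.remove)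
  also have "\<dots> = (\<Prod>x\<in>S-{v0}. det (g' x) powi \<sigma> x)"
    using assms by simp
  finally show ?thesis .
qed


lemma act_Rep:
  assumes "wf_quiver Q" "g \<in> GL Q \<beta>" "(V :: 'e \<Rightarrow> 'k::field mat) \<in> Rep Q \<beta>"
  shows "act Q g V \<in> Rep Q \<beta>"
  unfolding Rep_def mem_Collect_eq
proof (intro ballI)
  fix a assume a: "a \<in> Q1 Q"
  then have h: "hd Q a \<in> Q0 Q" and t: "tl Q a \<in> Q0 Q" using assms(1) unfolding wf_quiver_def by auto
  have "g (hd Q a) \<in> carrier_mat (\<beta> (hd Q a)) (\<beta> (hd Q a))" using assms(2) h unfolding GL_def by auto
  moreover have "mat_inv (g (tl Q a)) \<in> carrier_mat (\<beta> (tl Q a)) (\<beta> (tl Q a))"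
    using assms(2) t mat_inv_props(1) unfolding GL_def by blast
  moreover have "V a \<in> carrier_mat (\<beta> (hd Q a)) (\<beta> (tl Q a))" using assms(3) a unfolding Rep_def by auto
  ultimately show "act Q g V a \<in> carrier_mat (\<beta> (hd Q a)) (\<beta> (tl Q a))"
    unfolding act_def by auto
qed

theorem proposition4p8:
  fixes Q :: "('v, 'e) quiver" and v0 :: 'v and A :: "'e set" and b :: 'e
  assumes "wf_quiver Q"
    and "no_oriented_cycles Q"
    and "v0 \<in> Q0 Q"
    and "A \<subseteq> Q1 Q" and "b \<in> Q1 Q"
    and "{a \<in> Q1 Q. hd Q a = v0} = A"
    and "{a \<in> Q1 Q. tl Q a = v0} = {b}"
    and "property_S TYPE('k::{alg_closed_field, field_char_0}) Q"
  shows "property_S TYPE('k) (contract_quiver Q v0 A b)"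
proof -
  note wf = assms(1)
  define Qb where "Qb = contract_quiver Q v0 A b"
  define w where "w = hd Q b"
  have acyc: "acyclic {(tl Q a, hd Q a) | a. a \<in> Q1 Q}"
    using assms(2) unfolding no_oriented_cycles_def .
  have noloop: "tl Q a \<noteq> hd Q a" if "a \<in> Q1 Q" for a
  proof
    assume "tl Q a = hd Q a"
    then have "(hd Q a, hd Q a) \<in> {(tl Q a, hd Q a) | a. a \<in> Q1 Q}" using that by force
    then show False using acyc unfolding acyclic_def by blast
  qed
  have A_hd: "\<And>a. a \<in> A \<Longrightarrow> hd Q a = v0 \<and> a \<in> Q1 Q" using assms(6) by blast
  have A_tl: "\<And>a. a \<in> A \<Longrightarrow> tl Q a \<noteq> v0" using A_hd noloop by metis
  have b_tl: "tl Q b = v0" using assms(7) by blast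
  have w_ne: "w \<noteq> v0" using noloop[OF assms(5)] b_tl w_def by auto
  have bA: "b \<notin> A" using A_hd w_ne w_def by blast
  have other: "\<And>e. e \<in> Q1 Q \<Longrightarrow> e \<notin> insert b A \<Longrightarrow> hd Q e \<noteq> v0 \<and> tl Q e \<noteq> v0"
    using assms(6,7) by blast
  have fin: "finite (Q0 Q)" using wf unfolding wf_quiver_def by auto
  have w_in: "w \<in> Q0 Q" using wf assms(5) unfolding wf_quiver_def w_def by auto
  have Qb0: "Q0 Qb = Q0 Q - {v0}" and Qb1: "Q1 Qb = Inl ` (Q1 Q - insert b A) \<union> Inr ` A"
    and Qbt: "\<And>e. tl Qb (Inl e) = tl Q e" "\<And>e. tl Qb (Inr e) = tl Q e"
    and Qbh: "\<And>e. hd Qb (Inl e) = hd Q e" "\<And>e. hd Qb (Inr e) = w"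
    unfolding Qb_def contract_quiver_def w_def by auto
  show ?thesis
    unfolding property_S_def Qb_def[symmetric]
  proof (intro allI impI)
    fix \<beta>b :: "'v \<Rightarrow> nat" and Wb :: "'e + 'e \<Rightarrow> 'k mat"
    assume Wb: "Wb \<in> Rep Qb \<beta>b"
    show "saturated (S_of Qb \<beta>b Wb)"
      unfolding saturated_def
    proof (intro allI impI)
      fix \<sigma> :: "'v \<Rightarrow> int" and n :: nat
      assume n1: "1 \<le> n" and nS: "(\<lambda>x. int n * \<sigma> x) \<in> S_of Qb \<beta>b Wb"
      let ?n\<sigma> = "\<lambda>x. int n * \<sigma> x"
      have \<sigma>0: "\<forall>x. x \<notin> Q0 Qb \<longrightarrow> \<sigma> x = 0" using nS n1 unfolding S_of_def by auto
      have \<sigma>v0: "\<sigma> v0 = 0" using \<sigma>0 Qb0 by auto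
      obtain fb where fb: "fb \<in> SI Qb \<beta>b ?n\<sigma>" "fb Wb \<noteq> 0" using nS unfolding S_of_def by auto
      define \<beta> where "\<beta> = \<beta>b(v0 := \<beta>b w)"
      define L where "L = (\<lambda>(V::'e + 'e \<Rightarrow> 'k mat) e. if e = b then 1\<^sub>m (\<beta>b w) else if e \<in> A then V (Inr e) else V (Inl e))"
      define P where "P = (\<lambda>(V::'e \<Rightarrow> 'k mat) e. case e of Inl x \<Rightarrow> V x
         | Inr a \<Rightarrow> mat (\<beta>b w) (\<beta>b (tl Q a)) (\<lambda>(i,j). \<Sum>k<\<beta>b w. V b $$ (i,k) * V a $$ (k,j)))"

      have \<beta>_ne: "\<And>x. x \<noteq> v0 \<Longrightarrow> \<beta> x = \<beta>b x" and \<beta>v0: "\<beta> v0 = \<beta>b w"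
        unfolding \<beta>_def by auto
      have Rep_Inr: "V (Inr a) \<in> carrier_mat (\<beta>b w) (\<beta>b (tl Q a))" if "V \<in> Rep Qb \<beta>b" "a \<in> A" for V :: "'e + 'e \<Rightarrow> 'k mat" and a
      proof -
        have "Inr a \<in> Q1 Qb" using that Qb1 by auto
        then show ?thesis using that(1) unfolding Rep_def by (force simp: Qbh Qbt)
      qed
      have Rep_Inl: "V (Inl e) \<in> carrier_mat (\<beta>b (hd Q e)) (\<beta>b (tl Q e))" if "V \<in> Rep Qb \<beta>b" "e \<in> Q1 Q" "e \<notin> insert b A" for V :: "'e + 'e \<Rightarrow> 'k mat" and e
      proof -
        have "Inl e \<in> Q1 Qb" using that Qb1 by auto
        then show ?thesis using that(1) unfolding Rep_def by (force simp: Qbh Qbt)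
      qed
      have L_Rep: "L V \<in> Rep Q \<beta>" if V: "V \<in> Rep Qb \<beta>b" for V
        unfolding Rep_def mem_Collect_eq
      proof (intro ballI)
        fix a assume a: "a \<in> Q1 Q"
        show "L V a \<in> carrier_mat (\<beta> (hd Q a)) (\<beta> (tl Q a))"
        proof (cases "a = b")
          case True then show ?thesis using b_tl w_ne unfolding L_def \<beta>_def w_def by auto
        next
          case False
          show ?thesis
          proof (cases "a \<in> A")
            case True then show ?thesis using False Rep_Inr[OF V True] A_hd A_tl unfolding L_def \<beta>_def by auto
          next
            case F2: False
            then show ?thesis using False Rep_Inl[OF V a] other[OF a] unfolding L_def \<beta>_def by auto
          qed
        qed
      qed
      have Rep_b: "\<And>V. V \<in> Rep Q \<beta> \<Longrightarrow> V b \<in> carrier_mat (\<beta>b w) (\<beta>b w)"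
        using assms(5) b_tl w_ne unfolding Rep_def \<beta>_def w_def by auto
      have Rep_a: "\<And>V a. V \<in> Rep Q \<beta> \<Longrightarrow> a \<in> A \<Longrightarrow> V a \<in> carrier_mat (\<beta>b w) (\<beta>b (tl Q a))"
        using A_hd A_tl unfolding Rep_def \<beta>_def by fastforce
      have Rep_e: "\<And>V e. V \<in> Rep Q \<beta> \<Longrightarrow> e \<in> Q1 Q \<Longrightarrow> e \<notin> insert b A \<Longrightarrow> V e \<in> carrier_mat (\<beta>b (hd Q e)) (\<beta>b (tl Q e))"
        using other unfolding Rep_def \<beta>_def by fastforce
      have P_Inr: "P V (Inr a) = V b * V a" if V: "V \<in> Rep Q \<beta>" and a: "a \<in> A" for V a
        using Rep_b[OF V] Rep_a[OF V a]
        by (intro eq_matI) (auto simp: P_def scalar_prod_def atLeast0LessThan)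
      have P_Rep: "P V \<in> Rep Qb \<beta>b" if V: "V \<in> Rep Q \<beta>" for V
        unfolding Rep_def mem_Collect_eq
      proof (intro ballI)
        fix a assume "a \<in> Q1 Qb"
        then consider (l) e where "a = Inl e" "e \<in> Q1 Q" "e \<notin> insert b A"
          | (r) x where "a = Inr x" "x \<in> A" using Qb1 by auto
        then show "P V a \<in> carrier_mat (\<beta>b (hd Qb a)) (\<beta>b (tl Qb a))"
        proof cases
          case l
          then show ?thesis using Rep_e[OF V l(2,3)] by (simp add: P_def Qbh Qbt)
        next
          case r
          then show ?thesis using P_Inr[OF V r(2)] Rep_b[OF V] Rep_a[OF V r(2)]
            by (simp add: Qbh Qbt)
        qed
      qed
      have PL: "\<forall>a\<in>Q1 Qb. P (L V) a = V a" if V: "V \<in> Rep Qb \<beta>b" for V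
      proof
        fix a assume a: "a \<in> Q1 Qb"
        show "P (L V) a = V a"
        proof (cases a)
          case (Inl e)
          then show ?thesis using a unfolding Qb1 P_def L_def by auto
        next
          case (Inr x)
          then have x: "x \<in> A" using a unfolding Qb1 by auto
          have "P (L V) a = L V b * L V x" using P_Inr[OF L_Rep[OF V] x] Inr by simp
          also have "\<dots> = V a" using x bA Rep_Inr[OF V x] Inr unfolding L_def by auto
          finally show ?thesis .
        qed
      qed
      define W where "W = L Wb"
      have W: "W \<in> Rep Q \<beta>" using L_Rep[OF Wb] W_def by simp
      define f where "f = (\<lambda>V. fb (P V))"
      have f_poly: "f \<in> poly_fun Q \<beta>"
        unfolding f_def
      proof (rule poly_fun_subst[where f=fb and Q=Qb and \<beta>=\<beta>b and F=P and Q'=Q and \<beta>'=\<beta>])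
        show "fb \<in> poly_fun Qb \<beta>b" using fb(1) unfolding SI_def by auto
      next
        fix a i j assume a: "a \<in> Q1 Qb" and i: "i < \<beta>b (hd Qb a)" and j: "j < \<beta>b (tl Qb a)"
        from a consider (l) e where "a = Inl e" "e \<in> Q1 Q" "e \<notin> insert b A"
          | (r) x where "a = Inr x" "x \<in> A" using Qb1 by auto
        then show "(\<lambda>V. P V a $$ (i, j)) \<in> poly_fun Q \<beta>"
        proof cases
          case l
          have "(\<lambda>V. V e $$ (i, j)) \<in> poly_fun Q \<beta>"
            using l other[OF l(2,3)] i j \<beta>_ne by (intro poly_fun.coord) (auto simp: Qbh Qbt)
          then show ?thesis using l by (simp add: P_def)
        next
          case r
          have i': "i < \<beta>b w" and j': "j < \<beta>b (tl Q x)" using i j r by (auto simp: Qbh Qbt)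
          have "(\<lambda>V. \<Sum>k\<in>{..<\<beta>b w}. V b $$ (i,k) * V x $$ (k,j)) \<in> poly_fun Q \<beta>"
          proof (rule poly_fun_sum)
            show "\<forall>k\<in>{..<\<beta>b w}. (\<lambda>V. V b $$ (i,k) * V x $$ (k,j)) \<in> poly_fun Q \<beta>"
            proof
              fix k assume k: "k \<in> {..<\<beta>b w}"
              have c1: "(\<lambda>V. V b $$ (i,k)) \<in> poly_fun Q \<beta>"
                using assms(5) i' k b_tl w_ne \<beta>_ne \<beta>v0 unfolding w_def by (intro poly_fun.coord) auto
              have c2: "(\<lambda>V. V x $$ (k,j)) \<in> poly_fun Q \<beta>"
                using A_hd[OF r(2)] A_tl[OF r(2)] j' k \<beta>_ne \<beta>v0 by (intro poly_fun.coord) auto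
              show "(\<lambda>V. V b $$ (i,k) * V x $$ (k,j)) \<in> poly_fun Q \<beta>"
                using poly_fun.mult[OF c1 c2] .
            qed
          qed simp
          moreover have "(\<lambda>V. P V a $$ (i, j)) = (\<lambda>V. \<Sum>k\<in>{..<\<beta>b w}. V b $$ (i,k) * V x $$ (k,j))"
            using r i' j' by (simp add: P_def)
          ultimately show ?thesis by simp
        qed
      qed
      have f_SI: "f \<in> SI Q \<beta> ?n\<sigma>"
        unfolding SI_def mem_Collect_eq
      proof (intro conjI f_poly ballI)
        fix g :: "'v \<Rightarrow> 'k mat" and V :: "'e \<Rightarrow> 'k mat" assume g: "g \<in> GL Q \<beta>" and V: "V \<in> Rep Q \<beta>"
        have gQ: "g x \<in> carrier_mat (\<beta> x) (\<beta> x) \<and> det (g x) \<noteq> 0" if "x \<in> Q0 Q" for x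
          using g that unfolding GL_def by auto
        have gb: "g \<in> GL Qb \<beta>b" unfolding GL_def mem_Collect_eq Qb0
        proof
          fix x assume x: "x \<in> Q0 Q - {v0}"
          then show "g x \<in> carrier_mat (\<beta>b x) (\<beta>b x) \<and> det (g x) \<noteq> 0"
            using gQ[of x] \<beta>_ne[of x] by auto
        qed
        have aV: "act Q g V \<in> Rep Q \<beta>" using act_Rep[OF wf g V] .
        have agree: "\<forall>a\<in>Q1 Qb. P (act Q g V) a = act Qb g (P V) a"
        proof
          fix a assume "a \<in> Q1 Qb"
          then consider (l) e where "a = Inl e" "e \<in> Q1 Q" "e \<notin> insert b A"
            | (r) x where "a = Inr x" "x \<in> A" using Qb1 by auto
          then show "P (act Q g V) a = act Qb g (P V) a"
          proof cases
            case l
            then show ?thesis by (simp add: P_def act_def Qbh Qbt)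
          next
            case r
            have x: "x \<in> Q1 Q" "hd Q x = v0" "tl Q x \<noteq> v0" using A_hd[OF r(2)] A_tl[OF r(2)] by auto
            have txQ: "tl Q x \<in> Q0 Q" using wf x(1) unfolding wf_quiver_def by auto
            have g1: "g w \<in> carrier_mat (\<beta>b w) (\<beta>b w)" using gQ[OF w_in] \<beta>_ne w_ne by auto
            have g2: "g v0 \<in> carrier_mat (\<beta>b w) (\<beta>b w)" "det (g v0) \<noteq> 0" using gQ[OF assms(3)] \<beta>v0 by auto
            have g3: "mat_inv (g (tl Q x)) \<in> carrier_mat (\<beta>b (tl Q x)) (\<beta>b (tl Q x))"
              using mat_inv_props(1)[of "g (tl Q x)"] gQ[OF txQ] \<beta>_ne[OF x(3)] by auto
            have "P (act Q g V) a = act Q g V b * act Q g V x" using P_Inr[OF aV r(2)] r by simp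
            also have "\<dots> = (g w * V b * mat_inv (g v0)) * (g v0 * V x * mat_inv (g (tl Q x)))"
              unfolding act_def using b_tl x w_def by simp
            also have "\<dots> = g w * (V b * V x) * mat_inv (g (tl Q x))"
              by (rule mat_cancel[OF g1 Rep_b[OF V] g2(1) mat_inv_props(1)[OF g2] mat_inv_props(3)[OF g2] Rep_a[OF V r(2)] g3])
            also have "\<dots> = act Qb g (P V) a"
              unfolding act_def using r P_Inr[OF V r(2)] by (simp add: Qbh Qbt)
            finally show ?thesis .
          qed
        qed
        have fbSI: "fb (act Qb g (P V)) = character Qb ?n\<sigma> g * fb (P V)"
          using fb(1) gb P_Rep[OF V] unfolding SI_def by auto
        have ch: "character Q ?n\<sigma> g = character Qb ?n\<sigma> g"
          unfolding character_def Qb0 using char_eq[OF fin assms(3), of ?n\<sigma> g g] \<sigma>v0 by simp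
        have fbpoly: "fb \<in> poly_fun Qb \<beta>b" using fb(1) unfolding SI_def by auto
        show "f (act Q g V) = character Q ?n\<sigma> g * f V"
          unfolding f_def ch using poly_fun_agree[OF fbpoly agree] fbSI by simp
      qed
      have fW: "f W \<noteq> 0"
        using fb(2) poly_fun_agree[of fb Qb \<beta>b "P W" Wb] PL[OF Wb] fb(1)
        unfolding f_def W_def SI_def by auto
      have "?n\<sigma> \<in> S_of Q \<beta> W"
        unfolding S_of_def using f_SI fW nS Qb0 unfolding S_of_def by auto
      then have "\<sigma> \<in> S_of Q \<beta> W"
        using assms(8) W n1 unfolding property_S_def saturated_def by blast
      then obtain f0 where f0: "f0 \<in> SI Q \<beta> \<sigma>" "f0 W \<noteq> 0" unfolding S_of_def by auto
      define fb0 where "fb0 = (\<lambda>V. f0 (L V))"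
      have f0poly: "f0 \<in> poly_fun Q \<beta>" using f0(1) unfolding SI_def by auto
      have fb0_poly: "fb0 \<in> poly_fun Qb \<beta>b"
        unfolding fb0_def
      proof (rule poly_fun_subst[where f=f0 and Q=Q and \<beta>=\<beta> and F=L and Q'=Qb and \<beta>'=\<beta>b])
        show "f0 \<in> poly_fun Q \<beta>" by (rule f0poly)
      next
        fix e i j assume e: "e \<in> Q1 Q" and i: "i < \<beta> (hd Q e)" and j: "j < \<beta> (tl Q e)"
        show "(\<lambda>V. L V e $$ (i, j)) \<in> poly_fun Qb \<beta>b"
        proof (cases "e = b")
          case True
          then show ?thesis unfolding L_def using poly_fun.const by simp
        next
          case False
          show ?thesis
          proof (cases "e \<in> A")
            case True
            have "(\<lambda>V. V (Inr e) $$ (i, j)) \<in> poly_fun Qb \<beta>b"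
              using True i j A_hd[OF True] A_tl[OF True] \<beta>_ne \<beta>v0 Qb1
              by (intro poly_fun.coord) (auto simp: Qbh Qbt)
            then show ?thesis using True False unfolding L_def by simp
          next
            case F2: False
            have "(\<lambda>V. V (Inl e) $$ (i, j)) \<in> poly_fun Qb \<beta>b"
              using F2 False e i j other[OF e] \<beta>_ne Qb1
              by (intro poly_fun.coord) (auto simp: Qbh Qbt)
            then show ?thesis using F2 False unfolding L_def by simp
          qed
        qed
      qed
      have fb0_SI: "fb0 \<in> SI Qb \<beta>b \<sigma>"
        unfolding SI_def mem_Collect_eq
      proof (intro conjI fb0_poly ballI)
        fix gb :: "'v \<Rightarrow> 'k mat" and V :: "'e + 'e \<Rightarrow> 'k mat" assume gb: "gb \<in> GL Qb \<beta>b" and V: "V \<in> Rep Qb \<beta>b"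
        have gbQ: "gb x \<in> carrier_mat (\<beta>b x) (\<beta>b x) \<and> det (gb x) \<noteq> 0" if "x \<in> Q0 Q" "x \<noteq> v0" for x
          using gb that unfolding GL_def Qb0 by auto
        define g where "g = gb(v0 := gb w)"
        have gw: "gb w \<in> carrier_mat (\<beta>b w) (\<beta>b w)" "det (gb w) \<noteq> 0" using gbQ[OF w_in w_ne] by auto
        have g: "g \<in> GL Q \<beta>" unfolding GL_def mem_Collect_eq
        proof
          fix x assume x: "x \<in> Q0 Q"
          show "g x \<in> carrier_mat (\<beta> x) (\<beta> x) \<and> det (g x) \<noteq> 0"
          proof (cases "x = v0")
            case True then show ?thesis using gw \<beta>v0 unfolding g_def by simp
          next
            case False then show ?thesis using gbQ[OF x False] \<beta>_ne unfolding g_def by simp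
          qed
        qed
        have agree: "\<forall>e\<in>Q1 Q. L (act Qb gb V) e = act Q g (L V) e"
        proof
          fix e assume e: "e \<in> Q1 Q"
          show "L (act Qb gb V) e = act Q g (L V) e"
          proof (cases "e = b")
            case True
            have "act Q g (L V) e = gb w * 1\<^sub>m (\<beta>b w) * mat_inv (gb w)"
              unfolding act_def L_def g_def using True b_tl w_ne w_def by simp
            also have "\<dots> = 1\<^sub>m (\<beta>b w)" using gw mat_inv_props(2)[OF gw] by simp
            finally show ?thesis using True unfolding L_def by simp
          next
            case False
            show ?thesis
            proof (cases "e \<in> A")
              case True
              then show ?thesis using False A_hd[OF True] A_tl[OF True]
                unfolding L_def act_def g_def by (simp add: Qbh Qbt)
            next
              case F2: False
              then show ?thesis using False other[OF e]
                unfolding L_def act_def g_def by (simp add: Qbh Qbt)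
            qed
          qed
        qed
        have f0SI: "f0 (act Q g (L V)) = character Q \<sigma> g * f0 (L V)"
          using f0(1) g L_Rep[OF V] unfolding SI_def by auto
        have ch: "character Q \<sigma> g = character Qb \<sigma> gb"
          unfolding character_def Qb0 using char_eq[OF fin assms(3), of \<sigma> g gb] \<sigma>v0
          unfolding g_def by simp
        show "fb0 (act Qb gb V) = character Qb \<sigma> gb * fb0 V"
          unfolding fb0_def using poly_fun_agree[OF f0poly agree] f0SI ch by simp
      qed
      show "\<sigma> \<in> S_of Qb \<beta>b Wb"
        unfolding S_of_def using \<sigma>0 fb0_SI f0(2) unfolding fb0_def W_def by auto
    qed
  qed
qed

end
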